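(* Let $G=(V,E)$ be a strongly connected directed multigraph with distinct vertices $s,t\in V$ such that $G$ contains at least one arc $(t,s)$. Let $f$ be a flow from $s$ to $t$ in $G$ that does not use any arc $(t,s)$. If there is a directed path from $s$ to $t$ in $G_f$, then $G_f$ is strongly connected.
   Context: A flow from $s$ to $t$ in $G$ is a set of arc-disjoint directed paths from $s$ to $t$ in $G$. The residual graph $G_f$ is obtained from $G$ by reversing each arc lying on a path of $f$. (In the paper, $G$ arises from an input graph by adding $m$ parallel arcs $(t,s)$ and keeping only the strongly connected component containing $s$ and $t$.) *)

theory Defs
  imports "Graph_Theory.Graph_Theory"
begin

text \<open>A flow from s to t: a (finite) set of pairwise arc-disjoint directed paths from s to t,
  each path given as its list of arcs.\<close>
definition is_flow :: "('a,'b) pre_digraph \<Rightarrow> 'a \<Rightarrow> 'a \<Rightarrow> 'b list set \<Rightarrow> bool" where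
  "is_flow G s t f \<equiv> finite f \<and> (\<forall>p\<in>f. pre_digraph.apath G s p t)
     \<and> (\<forall>p\<in>f. \<forall>q\<in>f. p \<noteq> q \<longrightarrow> set p \<inter> set q = {})"

definition flow_arcs :: "'b list set \<Rightarrow> 'b set" where
  "flow_arcs f \<equiv> \<Union> (set ` f)"

definition residual :: "('a,'b) pre_digraph \<Rightarrow> 'b list set \<Rightarrow> ('a,'b) pre_digraph" where
  "residual G f \<equiv> G\<lparr> tail := (\<lambda>e. if e \<in> flow_arcs f then head G e else tail G e),
                      head := (\<lambda>e. if e \<in> flow_arcs f then tail G e else head G e) \<rparr>"

end

theory Submission
  imports Defs
begin

lemma res_simps:
  "verts (residual G f) = verts G" "arcs (residual G f) = arcs G"
  "tail (residual G f) e = (if e \<in> flow_arcs f then head G e else tail G e)"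
  "head (residual G f) e = (if e \<in> flow_arcs f then tail G e else head G e)"
  by (auto simp: residual_def)

lemma res_wf: "wf_digraph G \<Longrightarrow> wf_digraph (residual G f)"
  unfolding wf_digraph_def by (auto simp: res_simps)

lemma rev_walk:
  assumes wf: "wf_digraph G"
  shows "pre_digraph.awalk G x q y \<Longrightarrow> set q \<subseteq> flow_arcs f \<Longrightarrow> y \<rightarrow>\<^sup>*\<^bsub>residual G f\<^esub> x"
proof (induction q arbitrary: x)
  case Nil
  interpret H: wf_digraph "residual G f" using res_wf[OF wf] .
  from Nil show ?case by (auto simp: pre_digraph.awalk_def res_simps pre_digraph.cas.simps)
next
  case (Cons e q)
  interpret H: wf_digraph "residual G f" using res_wf[OF wf] .
  interpret G: wf_digraph G using wf .
  have e: "e \<in> arcs G" "tail G e = x" "e \<in> flow_arcs f" and w: "G.awalk (head G e) q y"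
    using Cons.prems by (auto simp: G.awalk_def)
  have "y \<rightarrow>\<^sup>*\<^bsub>residual G f\<^esub> head G e" using Cons.IH[OF w] Cons.prems by auto
  moreover have "head G e \<rightarrow>\<^bsub>residual G f\<^esub> x"
    using e by (intro H.dominatesI[of e]) (auto simp: res_simps arc_to_ends_def)
  ultimately show ?case by (rule H.reachable_adj_trans)
qed

theorem lemma1p3:
  fixes G :: "('a,'b) pre_digraph" and s t :: 'a and f :: "'b list set"
  assumes "fin_digraph G"
    and "strongly_connected G"
    and "s \<in> verts G" and "t \<in> verts G" and "s \<noteq> t"
    and "\<exists>e\<in>arcs G. tail G e = t \<and> head G e = s"
    and "is_flow G s t f"
    and "\<forall>e\<in>flow_arcs f. \<not> (tail G e = t \<and> head G e = s)"
    and "\<exists>p. pre_digraph.apath (residual G f) s p t"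
  shows "strongly_connected (residual G f)"
proof -
  interpret G: fin_digraph G by fact
  have wf: "wf_digraph G" by unfold_locales
  interpret H: wf_digraph "residual G f" using res_wf[OF wf] .
  have st: "s \<rightarrow>\<^sup>*\<^bsub>residual G f\<^esub> t"
    using assms(9) H.reachable_awalk H.apath_def by blast
  have arc: "tail G e \<rightarrow>\<^sup>*\<^bsub>residual G f\<^esub> head G e" if e: "e \<in> arcs G" for e
  proof (cases "e \<in> flow_arcs f")
    case False
    then show ?thesis using e
      by (intro H.reachable_adjI H.dominatesI[of e]) (auto simp: res_simps arc_to_ends_def)
  next
    case True
    then obtain p where p: "p \<in> f" "e \<in> set p" by (auto simp: flow_arcs_def)
    then have ap: "G.awalk s p t" using assms(7) by (auto simp: is_flow_def G.apath_def)
    from p obtain pre suf where ps: "p = pre @ e # suf" by (meson split_list)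
    have sub: "set pre \<subseteq> flow_arcs f" "set suf \<subseteq> flow_arcs f"
      using p ps by (auto simp: flow_arcs_def)
    have w1: "G.awalk s pre (tail G e)" and w2: "G.awalk (head G e) suf t"
      using ap unfolding ps by (auto simp: G.awalk_Cons_iff)
    have "tail G e \<rightarrow>\<^sup>*\<^bsub>residual G f\<^esub> s" by (rule rev_walk[OF wf w1 sub(1)])
    also note st
    also have "t \<rightarrow>\<^sup>*\<^bsub>residual G f\<^esub> head G e" by (rule rev_walk[OF wf w2 sub(2)])
    finally show ?thesis .
  qed
  have reach: "u \<rightarrow>\<^sup>*\<^bsub>residual G f\<^esub> v" if "u \<rightarrow>\<^sup>*\<^bsub>G\<^esub> v" for u v
    using that
  proof (induction rule: G.reachable_induct)
    case base then show ?case by (simp add: res_simps)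
  next
    case (step x y)
    from step.hyps(2) obtain e where "e \<in> arcs G" "tail G e = x" "head G e = y" by auto
    with arc step.IH show ?case by (metis H.reachable_trans)
  qed
  show ?thesis using assms(2) reach unfolding strongly_connected_def by (auto simp: res_simps)
qed

end
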